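(* Let $X$ be a uniformly locally finite metric space and $h$ a coarse operator on $\ell_2(X)$. If $\xi\in\mathrm{dom}(h)$, then \[ h\xi=\sum_{x\in X}\langle\xi,\delta_x\rangle h\delta_x \] (the series converging in norm). Consequently, $h$ is admissible.
   Context: Uniformly locally finite: $\sup_x|B_r(x)|<\infty$ for all $r>0$. $(\delta_x)$ canonical basis of $\ell_2(X)$, $c_{00}(X)$ finitely supported vectors. A partial translation is a bijection $f\colon\mathrm{dom}(f)\subseteq X\to\mathrm{ran}(f)\subseteq X$ with $\sup_{x}d(x,f(x))<\infty$; $v_f\delta_x=\delta_{f(x)}$ on $\mathrm{dom}(f)$, $0$ elsewhere. A closed operator $h$ is a coarse operator if $v_f(\mathrm{dom}(h))\subseteq\mathrm{dom}(h)$ and $hv_f-v_fh$ is bounded on $\mathrm{dom}(h)$ for every partial translation $f$. An operator $h$ is admissible if it is closed, $c_{00}(X)\subseteq\mathrm{dom}(h)$, and $h\xi=\sum_y\langle\xi,\delta_y\rangle h\delta_y$ for all $\xi\in\mathrm{dom}(h)$. *)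

theory Defs
  imports "HOL-Analysis.Analysis" "HOL-Library.Function_Algebras"
begin

text \<open>The metric space X is the universe of a type of class metric_space.
  Vectors of l2(X) are functions X => complex with square-summable modulus.\<close>

definition uniformly_locally_finite :: "'a::metric_space itself \<Rightarrow> bool" where
  "uniformly_locally_finite _ \<longleftrightarrow>
     (\<forall>r>0. \<exists>N::nat. \<forall>x::'a. finite (ball x r) \<and> card (ball x r) \<le> N)"

definition l2 :: "('a \<Rightarrow> complex) set" where
  "l2 = {\<xi>. (\<lambda>x. (cmod (\<xi> x))\<^sup>2) summable_on UNIV}"

definition l2_norm :: "('a \<Rightarrow> complex) \<Rightarrow> real" where
  "l2_norm \<xi> = sqrt (infsum (\<lambda>x. (cmod (\<xi> x))\<^sup>2) UNIV)"

definition l2_inner :: "('a \<Rightarrow> complex) \<Rightarrow> ('a \<Rightarrow> complex) \<Rightarrow> complex" where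
  "l2_inner \<xi> \<eta> = infsum (\<lambda>x. \<xi> x * cnj (\<eta> x)) UNIV"

definition delta :: "'a \<Rightarrow> ('a \<Rightarrow> complex)" where
  "delta x = (\<lambda>y. if y = x then 1 else 0)"

definition c00 :: "('a \<Rightarrow> complex) set" where
  "c00 = {\<xi>. finite {x. \<xi> x \<noteq> 0}}"

definition l2_has_sum :: "('a \<Rightarrow> ('b \<Rightarrow> complex)) \<Rightarrow> ('b \<Rightarrow> complex) \<Rightarrow> bool" where
  "l2_has_sum v s \<longleftrightarrow>
     (\<forall>e>0. \<exists>F. finite F \<and>
        (\<forall>G. finite G \<and> F \<subseteq> G \<longrightarrow> l2_norm (s - (\<Sum>x\<in>G. v x)) < e))"

definition closed_operator :: "('a \<Rightarrow> complex) set \<Rightarrow> (('a \<Rightarrow> complex) \<Rightarrow> ('a \<Rightarrow> complex)) \<Rightarrow> bool" where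
  "closed_operator D h \<longleftrightarrow>
     D \<subseteq> l2 \<and> h ` D \<subseteq> l2 \<and>
     0 \<in> D \<and> (\<forall>\<xi>\<in>D. \<forall>\<eta>\<in>D. \<xi> + \<eta> \<in> D) \<and> (\<forall>c. \<forall>\<xi>\<in>D. (\<lambda>x. c * \<xi> x) \<in> D) \<and>
     (\<forall>\<xi>\<in>D. \<forall>\<eta>\<in>D. h (\<xi> + \<eta>) = h \<xi> + h \<eta>) \<and>
     (\<forall>c. \<forall>\<xi>\<in>D. h (\<lambda>x. c * \<xi> x) = (\<lambda>x. c * h \<xi> x)) \<and>
     (\<forall>\<xi>\<in>l2. \<forall>e>0. \<exists>\<eta>\<in>D. l2_norm (\<xi> - \<eta>) < e) \<and>
     (\<forall>s \<xi> \<eta>. (\<forall>n. s n \<in> D) \<and> \<xi> \<in> l2 \<and> \<eta> \<in> l2 \<and>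
        ((\<lambda>n. l2_norm (s n - \<xi>)) \<longlonglongrightarrow> 0) \<and>
        ((\<lambda>n. l2_norm (h (s n) - \<eta>)) \<longlonglongrightarrow> 0)
        \<longrightarrow> \<xi> \<in> D \<and> h \<xi> = \<eta>)"

definition partial_translation :: "'a::metric_space set \<Rightarrow> ('a \<Rightarrow> 'a) \<Rightarrow> bool" where
  "partial_translation A f \<longleftrightarrow> inj_on f A \<and> (\<exists>C. \<forall>x\<in>A. dist x (f x) \<le> C)"

text \<open>v_f delta_x = delta_(f x) for x in A, 0 otherwise\<close>
definition vf :: "'a set \<Rightarrow> ('a \<Rightarrow> 'a) \<Rightarrow> ('a \<Rightarrow> complex) \<Rightarrow> ('a \<Rightarrow> complex)" where
  "vf A f \<xi> = (\<lambda>y. if y \<in> f ` A then \<xi> (inv_into A f y) else 0)"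

definition coarse_operator :: "('a::metric_space \<Rightarrow> complex) set \<Rightarrow> (('a \<Rightarrow> complex) \<Rightarrow> ('a \<Rightarrow> complex)) \<Rightarrow> bool" where
  "coarse_operator D h \<longleftrightarrow> closed_operator D h \<and>
     (\<forall>A f. partial_translation A f \<longrightarrow>
        vf A f ` D \<subseteq> D \<and>
        (\<exists>C. \<forall>\<xi>\<in>D. l2_norm (h (vf A f \<xi>) - vf A f (h \<xi>)) \<le> C * l2_norm \<xi>))"

definition admissible :: "('a \<Rightarrow> complex) set \<Rightarrow> (('a \<Rightarrow> complex) \<Rightarrow> ('a \<Rightarrow> complex)) \<Rightarrow> bool" where
  "admissible D h \<longleftrightarrow> closed_operator D h \<and> c00 \<subseteq> D \<and>
     (\<forall>\<xi>\<in>D. l2_has_sum (\<lambda>y. (\<lambda>z. l2_inner \<xi> (delta y) * h (delta y) z)) (h \<xi>))"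

end

theory Submission
  imports Defs
begin

lemma l2_norm_nonneg: "0 \<le> l2_norm v"
  unfolding l2_norm_def by (simp add: infsum_nonneg)

lemma l2_norm_sq: "(l2_norm v)\<^sup>2 = infsum (\<lambda>x. (cmod (v x))\<^sup>2) UNIV"
  unfolding l2_norm_def by (simp add: infsum_nonneg)

lemma l2_partial:
  assumes "v \<in> l2" "finite E"
  shows "(\<Sum>y\<in>E. (cmod (v y))\<^sup>2) \<le> (l2_norm v)\<^sup>2"
proof -
  have "(\<Sum>y\<in>E. (cmod (v y))\<^sup>2) = infsum (\<lambda>x. (cmod (v x))\<^sup>2) E"
    using assms by simp
  also have "\<dots> \<le> infsum (\<lambda>x. (cmod (v x))\<^sup>2) UNIV"
    by (rule infsum_mono_neutral) (use assms in \<open>auto simp: l2_def\<close>)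
  finally show ?thesis by (simp add: l2_norm_sq)
qed

lemma l2_partial_L:
  assumes "v \<in> l2"
  shows "L2_set (\<lambda>y. cmod (v y)) E \<le> l2_norm v"
proof (cases "finite E")
  case True
  have "L2_set (\<lambda>y. cmod (v y)) E = sqrt (\<Sum>y\<in>E. (cmod (v y))\<^sup>2)"
    by (simp add: L2_set_def)
  also have "\<dots> \<le> sqrt ((l2_norm v)\<^sup>2)"
    using l2_partial[OF assms True] real_sqrt_le_mono by blast
  also have "\<dots> = l2_norm v" using l2_norm_nonneg[of v] by simp
  finally show ?thesis .
next
  case False
  then show ?thesis by (simp add: L2_set_def l2_norm_nonneg)
qed

lemma l2_boundI:
  assumes "\<And>E. finite E \<Longrightarrow> (\<Sum>y\<in>E. (cmod (v y))\<^sup>2) \<le> B"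
  shows "v \<in> l2 \<and> (l2_norm v)\<^sup>2 \<le> B"
proof -
  have s: "(\<lambda>x. (cmod (v x))\<^sup>2) summable_on UNIV"
    by (rule nonneg_bdd_above_summable_on) (use assms in \<open>auto intro!: bdd_aboveI\<close>)
  have "infsum (\<lambda>x. (cmod (v x))\<^sup>2) UNIV \<le> B"
    by (rule infsum_le_finite_sums[OF s]) (use assms in auto)
  with s show ?thesis by (simp add: l2_def l2_norm_sq)
qed

lemma l2_boundI_L:
  assumes "\<And>E. finite E \<Longrightarrow> L2_set (\<lambda>y. cmod (v y)) E \<le> B"
  shows "v \<in> l2 \<and> l2_norm v \<le> B"
proof -
  have B0: "0 \<le> B" using assms[of "{}"] by simp
  have "\<And>E. finite E \<Longrightarrow> (\<Sum>y\<in>E. (cmod (v y))\<^sup>2) \<le> B\<^sup>2"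
  proof -
    fix E :: "'a set" assume "finite E"
    have "(\<Sum>y\<in>E. (cmod (v y))\<^sup>2) = (L2_set (\<lambda>y. cmod (v y)) E)\<^sup>2"
      by (simp add: L2_set_def sum_nonneg)
    also have "\<dots> \<le> B\<^sup>2"
      using assms[OF \<open>finite E\<close>] by (simp add: power_mono)
    finally show "(\<Sum>y\<in>E. (cmod (v y))\<^sup>2) \<le> B\<^sup>2" .
  qed
  from l2_boundI[OF this] have "v \<in> l2" "(l2_norm v)\<^sup>2 \<le> B\<^sup>2" by auto
  then show ?thesis using B0 l2_norm_nonneg[of v]
    by (meson power2_le_imp_le)
qed

lemma l2_dom:
  assumes "w \<in> l2" "\<And>y. cmod (u y) \<le> cmod (w y)"
  shows "u \<in> l2 \<and> l2_norm u \<le> l2_norm w"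
proof (rule l2_boundI_L)
  fix E :: "'a set"
  have "L2_set (\<lambda>y. cmod (u y)) E \<le> L2_set (\<lambda>y. cmod (w y)) E"
    by (rule L2_set_mono) (use assms in auto)
  also have "\<dots> \<le> l2_norm w" by (rule l2_partial_L[OF assms(1)])
  finally show "L2_set (\<lambda>y. cmod (u y)) E \<le> l2_norm w" .
qed

lemma l2_add:
  assumes "u \<in> l2" "v \<in> l2"
  shows "u + v \<in> l2 \<and> l2_norm (u + v) \<le> l2_norm u + l2_norm v"
proof (rule l2_boundI_L)
  fix E :: "'a set"
  have "L2_set (\<lambda>y. cmod ((u + v) y)) E \<le> L2_set (\<lambda>y. cmod (u y) + cmod (v y)) E"
    by (rule L2_set_mono) (auto simp: norm_triangle_ineq)
  also have "\<dots> \<le> L2_set (\<lambda>y. cmod (u y)) E + L2_set (\<lambda>y. cmod (v y)) E"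
    by (rule L2_set_triangle_ineq)
  also have "\<dots> \<le> l2_norm u + l2_norm v"
    using l2_partial_L[OF assms(1), of E] l2_partial_L[OF assms(2), of E] by linarith
  finally show "L2_set (\<lambda>y. cmod ((u + v) y)) E \<le> l2_norm u + l2_norm v" .
qed

lemma l2_uminus:
  assumes "v \<in> l2" shows "- v \<in> l2 \<and> l2_norm (- v) = l2_norm v"
  using assms by (simp add: l2_def l2_norm_def)

lemma l2_diff:
  assumes "u \<in> l2" "v \<in> l2"
  shows "u - v \<in> l2 \<and> l2_norm (u - v) \<le> l2_norm u + l2_norm v"
  using l2_add[OF assms(1) l2_uminus[OF assms(2), THEN conjunct1]] l2_uminus[OF assms(2)]
  by (simp add: diff_conv_add_uminus del: add_uminus_conv_diff)

lemma l2_scale: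
  assumes "v \<in> l2" shows "(\<lambda>x. c * v x) \<in> l2"
proof -
  have "(\<lambda>x. (cmod c)\<^sup>2 * (cmod (v x))\<^sup>2) summable_on UNIV"
    using assms unfolding l2_def by (simp add: summable_on_cmult_right)
  then show ?thesis by (simp add: l2_def norm_mult power_mult_distrib)
qed

lemma l2_single:
  assumes "v \<in> l2" shows "cmod (v x) \<le> l2_norm v"
  using l2_partial_L[OF assms, of "{x}"] by (simp add: L2_set_def)

definition P :: "'a set \<Rightarrow> ('a \<Rightarrow> complex) \<Rightarrow> ('a \<Rightarrow> complex)" where
  "P A v = (\<lambda>y. if y \<in> A then v y else 0)"

lemma P_l2_mono:
  assumes "v \<in> l2" "A \<subseteq> B"
  shows "P A v \<in> l2 \<and> l2_norm (P A v) \<le> l2_norm (P B v)"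
proof -
  have "P B v \<in> l2" using l2_dom[OF assms(1), of "P B v"] by (auto simp: P_def)
  moreover have "\<And>y. cmod (P A v y) \<le> cmod (P B v y)" using assms(2) by (auto simp: P_def)
  ultimately show ?thesis using l2_dom[of "P B v" "P A v"] by blast
qed

lemma P_l2: "v \<in> l2 \<Longrightarrow> P A v \<in> l2 \<and> l2_norm (P A v) \<le> l2_norm v"
  using l2_dom[of v "P A v"] by (auto simp: P_def)

lemma l2_tail:
  assumes "v \<in> l2" "e > 0"
  shows "\<exists>F. finite F \<and> l2_norm (P (- F) v) < e"
proof -
  let ?f = "\<lambda>x. (cmod (v x))\<^sup>2"
  have hs: "(?f has_sum (l2_norm v)\<^sup>2) UNIV"
    using assms(1) by (simp add: l2_def l2_norm_sq)
  obtain F where F: "finite F" "dist (sum ?f F) ((l2_norm v)\<^sup>2) \<le> e\<^sup>2 / 2"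
    using has_sum_finite_approximation[OF hs, of "e\<^sup>2/2"] assms(2) by auto
  have A1: "P (- F) v \<in> l2 \<and> (l2_norm (P (- F) v))\<^sup>2 \<le> (l2_norm v)\<^sup>2 - sum ?f F"
  proof (rule l2_boundI)
    fix E :: "'a set" assume E: "finite E"
    have "(\<Sum>y\<in>E. (cmod (P (- F) v y))\<^sup>2) = (\<Sum>y\<in>E - F. ?f y)"
      by (rule sum.mono_neutral_cong_right) (auto simp: P_def E)
    also have "\<dots> = (\<Sum>y\<in>E \<union> F. ?f y) - sum ?f F"
    proof -
      have "E \<union> F = (E - F) \<union> F" by auto
      then have "(\<Sum>y\<in>E \<union> F. ?f y) = (\<Sum>y\<in>E - F. ?f y) + sum ?f F"
        using E F(1) by (metis (no_types, lifting) Diff_disjoint finite_Diff sum.union_disjoint inf_commute)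
      then show ?thesis by simp
    qed
    also have "\<dots> \<le> (l2_norm v)\<^sup>2 - sum ?f F"
      using l2_partial[OF assms(1), of "E \<union> F"] E F(1) by simp
    finally show "(\<Sum>y\<in>E. (cmod (P (- F) v y))\<^sup>2) \<le> (l2_norm v)\<^sup>2 - sum ?f F" .
  qed
  have A2: "(l2_norm v)\<^sup>2 - sum ?f F \<le> e\<^sup>2 / 2"
    using F(2) unfolding dist_real_def by linarith
  have "0 < e\<^sup>2" using assms(2) by simp
  then have "(l2_norm (P (- F) v))\<^sup>2 < e\<^sup>2" using A1 A2 by linarith
  then have "l2_norm (P (- F) v) < e"
    using assms(2) l2_norm_nonneg by (meson power_less_imp_less_base less_imp_le)
  with F(1) show ?thesis by blast
qed

locale coarse =
  fixes D :: "('a::metric_space \<Rightarrow> complex) set"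
    and h :: "('a \<Rightarrow> complex) \<Rightarrow> ('a \<Rightarrow> complex)"
  assumes co: "coarse_operator D h"
begin

lemma cl: "closed_operator D h" using co by (simp add: coarse_operator_def)

lemma clc1: "D \<subseteq> l2"
  using cl unfolding closed_operator_def by (elim conjE) assumption
lemma clc2: "h ` D \<subseteq> l2"
  using cl unfolding closed_operator_def by (elim conjE) assumption
lemma clc3: "0 \<in> D"
  using cl unfolding closed_operator_def by (elim conjE) assumption
lemma clc4: "\<forall>\<xi>\<in>D. \<forall>\<eta>\<in>D. \<xi> + \<eta> \<in> D"
  using cl unfolding closed_operator_def by (elim conjE) assumption
lemma clc5: "\<forall>c. \<forall>\<xi>\<in>D. (\<lambda>x. c * \<xi> x) \<in> D"
  using cl unfolding closed_operator_def by (elim conjE) assumption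
lemma clc6: "\<forall>\<xi>\<in>D. \<forall>\<eta>\<in>D. h (\<xi> + \<eta>) = h \<xi> + h \<eta>"
  using cl unfolding closed_operator_def by (elim conjE) assumption
lemma clc7: "\<forall>c. \<forall>\<xi>\<in>D. h (\<lambda>x. c * \<xi> x) = (\<lambda>x. c * h \<xi> x)"
  using cl unfolding closed_operator_def by (elim conjE) assumption
lemma clc8: "\<forall>\<xi>\<in>l2. \<forall>e>0. \<exists>\<eta>\<in>D. l2_norm (\<xi> - \<eta>) < e"
  using cl unfolding closed_operator_def by (elim conjE) assumption

lemma D_l2: "\<xi> \<in> D \<Longrightarrow> \<xi> \<in> l2" using clc1 by (rule subsetD)
lemma hD_l2: "\<xi> \<in> D \<Longrightarrow> h \<xi> \<in> l2" using clc2 by blast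
lemma D_add: "\<xi> \<in> D \<Longrightarrow> \<eta> \<in> D \<Longrightarrow> \<xi> + \<eta> \<in> D" using clc4 by blast
lemma h_add: "\<xi> \<in> D \<Longrightarrow> \<eta> \<in> D \<Longrightarrow> h (\<xi> + \<eta>) = h \<xi> + h \<eta>" using clc6 by blast
lemma D_scale: "\<xi> \<in> D \<Longrightarrow> (\<lambda>x. c * \<xi> x) \<in> D" using clc5 by blast
lemma h_scale: "\<xi> \<in> D \<Longrightarrow> h (\<lambda>x. c * \<xi> x) = (\<lambda>x. c * h \<xi> x)" using clc7 by blast
lemma D_zero: "0 \<in> D" by (rule clc3)
lemma D_dense: "\<xi> \<in> l2 \<Longrightarrow> e > 0 \<Longrightarrow> \<exists>\<eta>\<in>D. l2_norm (\<xi> - \<eta>) < e"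
  using clc8 by blast

lemma h_zero: "h 0 = 0"
  using h_add[OF D_zero D_zero] by simp

lemma neg_eq: "- \<xi> = (\<lambda>x. (-1) * \<xi> x)" for \<xi> :: "'a \<Rightarrow> complex"
  by (simp add: fun_eq_iff)

lemma D_uminus: "\<xi> \<in> D \<Longrightarrow> - \<xi> \<in> D"
  unfolding neg_eq[of \<xi>] by (rule D_scale)

lemma h_uminus: "\<xi> \<in> D \<Longrightarrow> h (- \<xi>) = - h \<xi>"
  unfolding neg_eq[of \<xi>] neg_eq[of "h \<xi>"] by (rule h_scale)

lemma D_diff: "\<xi> \<in> D \<Longrightarrow> \<eta> \<in> D \<Longrightarrow> \<xi> - \<eta> \<in> D"
  unfolding diff_conv_add_uminus by (intro D_add D_uminus)

lemma h_diff: "\<xi> \<in> D \<Longrightarrow> \<eta> \<in> D \<Longrightarrow> h (\<xi> - \<eta>) = h \<xi> - h \<eta>"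
  unfolding diff_conv_add_uminus by (simp only: h_add D_uminus h_uminus)

lemma pt_id: "partial_translation A id"
  by (auto simp: partial_translation_def intro!: exI[of _ 0])

lemma vf_id: "vf A id \<xi> = P A \<xi>"
proof -
  have "x \<in> A \<Longrightarrow> (SOME y. y \<in> A \<and> y = x) = x" for x by (rule some_equality) auto
  then show ?thesis by (auto simp: vf_def P_def fun_eq_iff inv_into_def)
qed

lemma co_id: "vf A id ` D \<subseteq> D \<and> (\<exists>C. \<forall>\<xi>\<in>D. l2_norm (h (vf A id \<xi>) - vf A id (h \<xi>)) \<le> C * l2_norm \<xi>)"
  using co pt_id[of A] unfolding coarse_operator_def by blast

lemma P_D: "\<xi> \<in> D \<Longrightarrow> P A \<xi> \<in> D"
  using co_id[of A] unfolding vf_id by blast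

definition cm :: "'a set \<Rightarrow> ('a \<Rightarrow> complex) \<Rightarrow> ('a \<Rightarrow> complex)" where
  "cm A \<eta> = h (P A \<eta>) - P A (h \<eta>)"

lemma C_ex: "\<exists>C. \<forall>\<xi>\<in>D. l2_norm (cm A \<xi>) \<le> C * l2_norm \<xi>"
  using co_id[of A] unfolding vf_id cm_def by blast

definition C :: "'a set \<Rightarrow> real" where
  "C A = (SOME C. \<forall>\<xi>\<in>D. l2_norm (cm A \<xi>) \<le> C * l2_norm \<xi>)"

lemma C_bound: "\<xi> \<in> D \<Longrightarrow> l2_norm (cm A \<xi>) \<le> C A * l2_norm \<xi>"
  using someI_ex[OF C_ex[of A]] unfolding C_def by blast

lemma cm_l2: "\<xi> \<in> D \<Longrightarrow> cm A \<xi> \<in> l2"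
  unfolding cm_def using l2_diff hD_l2 P_D P_l2 by blast

lemma P_union: "A \<inter> B = {} \<Longrightarrow> P (A \<union> B) v = P A v + P B v"
  by (auto simp: P_def fun_eq_iff)

lemma P_add: "P A (u + v) = P A u + P A v"
  by (auto simp: P_def fun_eq_iff)

lemma cm_add_set: "A \<inter> B = {} \<Longrightarrow> \<xi> \<in> D \<Longrightarrow> cm (A \<union> B) \<xi> = cm A \<xi> + cm B \<xi>"
proof -
  assume d: "A \<inter> B = {}" and x: "\<xi> \<in> D"
  have "h (P (A \<union> B) \<xi>) = h (P A \<xi>) + h (P B \<xi>)"
    unfolding P_union[OF d] by (rule h_add[OF P_D[OF x] P_D[OF x]])
  then show ?thesis unfolding cm_def P_union[OF d] by (simp add: algebra_simps)
qed

lemma cm_add_vec: "\<xi> \<in> D \<Longrightarrow> \<eta> \<in> D \<Longrightarrow> cm A (\<xi> + \<eta>) = cm A \<xi> + cm A \<eta>"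
  unfolding cm_def by (simp add: P_add h_add P_D)

lemma cm_local: "y \<in> U \<Longrightarrow> cm A (P U a) y = cm (A \<inter> U) (P U a) y"
proof -
  assume y: "y \<in> U"
  have "P A (P U a) = P (A \<inter> U) (P U a)" by (auto simp: P_def fun_eq_iff)
  then show ?thesis using y unfolding cm_def by (simp add: P_def)
qed

lemma P_insert: "x \<notin> G \<Longrightarrow> P (insert x G) \<xi> = P G \<xi> + (\<lambda>z. \<xi> x * delta x z)"
  by (auto simp: P_def delta_def fun_eq_iff)

lemma delta_l2: "delta (x::'a) \<in> l2"
proof -
  have "delta x \<in> l2 \<and> (l2_norm (delta x))\<^sup>2 \<le> 1"
  proof (rule l2_boundI)
    fix E :: "'a set" assume "finite E"
    have "(\<Sum>y\<in>E. (cmod (delta x y))\<^sup>2) = (\<Sum>y\<in>E \<inter> {x}. (cmod (delta x y))\<^sup>2)"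
      by (rule sum.mono_neutral_cong_right) (auto simp: delta_def \<open>finite E\<close>)
    also have "\<dots> \<le> 1" by (cases "x \<in> E") (auto simp: delta_def)
    finally show "(\<Sum>y\<in>E. (cmod (delta x y))\<^sup>2) \<le> 1" .
  qed
  then show ?thesis by blast
qed

lemma delta_D: "delta x \<in> D"
proof -
  obtain \<eta> where \<eta>: "\<eta> \<in> D" "l2_norm (delta x - \<eta>) < 1"
    using D_dense[OF delta_l2, of 1] by auto
  have "cmod ((delta x - \<eta>) x) \<le> l2_norm (delta x - \<eta>)"
    by (rule l2_single) (use l2_diff[OF delta_l2 D_l2[OF \<eta>(1)]] in blast)
  with \<eta>(2) have "cmod (1 - \<eta> x) < 1" by (simp add: delta_def)
  then have nz: "\<eta> x \<noteq> 0" by auto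
  have "(\<lambda>z. (1 / \<eta> x) * P {x} \<eta> z) \<in> D" by (rule D_scale[OF P_D[OF \<eta>(1)]])
  moreover have "(\<lambda>z. (1 / \<eta> x) * P {x} \<eta> z) = delta x"
    using nz by (auto simp: P_def delta_def fun_eq_iff)
  ultimately show ?thesis by simp
qed

lemma PG_D:
  assumes "finite G"
  shows "P G \<xi> \<in> D \<and> h (P G \<xi>) = (\<Sum>x\<in>G. (\<lambda>z. \<xi> x * h (delta x) z))"
  using assms
proof (induction G rule: finite_induct)
  case empty
  have e: "P {} \<xi> = 0" by (simp add: P_def fun_eq_iff)
  show ?case unfolding e sum.empty using D_zero h_zero by blast
next
  case (insert x G)
  have d: "(\<lambda>z. \<xi> x * delta x z) \<in> D" by (rule D_scale[OF delta_D])
  from insert.IH have IH1: "P G \<xi> \<in> D" and IH2: "h (P G \<xi>) = (\<Sum>x\<in>G. (\<lambda>z. \<xi> x * h (delta x) z))"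
    by blast+
  have e1: "h (P G \<xi> + (\<lambda>z. \<xi> x * delta x z)) = h (P G \<xi>) + (\<lambda>z. \<xi> x * h (delta x) z)"
    by (simp only: h_add[OF IH1 d] h_scale[OF delta_D])
  have e2: "(\<Sum>y\<in>insert x G. (\<lambda>z. \<xi> y * h (delta y) z)) = (\<lambda>z. \<xi> x * h (delta x) z) + (\<Sum>y\<in>G. (\<lambda>z. \<xi> y * h (delta y) z))"
    by (rule sum.insert[OF insert(1,2)])
  show ?case unfolding P_insert[OF insert(2)] e1 e2 IH2
    using D_add[OF IH1 d] by (simp only: add.commute)
qed

lemma c00_D: "c00 \<subseteq> D"
proof
  fix \<xi> :: "'a \<Rightarrow> complex" assume "\<xi> \<in> c00"
  then have f: "finite {x. \<xi> x \<noteq> 0}" by (simp add: c00_def)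
  have "P {x. \<xi> x \<noteq> 0} \<xi> = \<xi>" by (auto simp: P_def fun_eq_iff)
  then show "\<xi> \<in> D" using PG_D[OF f, of \<xi>] by simp
qed

end

lemma sq_tri: "(cmod (u + v))\<^sup>2 \<le> 2 * (cmod u)\<^sup>2 + 2 * (cmod v)\<^sup>2"
proof -
  have "cmod (u + v) \<le> cmod u + cmod v" by (rule norm_triangle_ineq)
  then have "(cmod (u + v))\<^sup>2 \<le> (cmod u + cmod v)\<^sup>2" by (simp add: power_mono)
  also have "\<dots> \<le> 2 * (cmod u)\<^sup>2 + 2 * (cmod v)\<^sup>2"
    by (smt (verit) sum_squares_bound power2_sum)
  finally show ?thesis .
qed

lemma sum_split2:
  assumes "\<And>y. y \<in> U \<Longrightarrow> w y = f y + g y"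
  shows "(\<Sum>y\<in>U. (cmod (w y))\<^sup>2) \<le> 2 * (\<Sum>y\<in>U. (cmod (f y))\<^sup>2) + 2 * (\<Sum>y\<in>U. (cmod (g y))\<^sup>2)"
proof -
  have "(\<Sum>y\<in>U. (cmod (w y))\<^sup>2) \<le> (\<Sum>y\<in>U. 2 * (cmod (f y))\<^sup>2 + 2 * (cmod (g y))\<^sup>2)"
    by (rule sum_mono) (use assms sq_tri in auto)
  also have "\<dots> = 2 * (\<Sum>y\<in>U. (cmod (f y))\<^sup>2) + 2 * (\<Sum>y\<in>U. (cmod (g y))\<^sup>2)"
    by (simp add: sum.distrib sum_distrib_left)
  finally show ?thesis .
qed

context coarse
begin

definition Qf :: "'a set \<Rightarrow> 'a set \<Rightarrow> ('a \<Rightarrow> complex) \<Rightarrow> real" where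
  "Qf A U a = (\<Sum>y\<in>U. (cmod (cm A (P U a) y))\<^sup>2)"

definition Nf :: "'a set \<Rightarrow> ('a \<Rightarrow> complex) \<Rightarrow> real" where
  "Nf U a = (\<Sum>x\<in>U. (cmod (a x))\<^sup>2)"

lemma Nf_nonneg: "0 \<le> Nf U a" by (simp add: Nf_def sum_nonneg)
lemma Qf_nonneg: "0 \<le> Qf A U a" by (simp add: Qf_def sum_nonneg)

lemma PU_norm:
  assumes "finite U" shows "(l2_norm (P U a))\<^sup>2 \<le> Nf U a"
proof -
  have "P U a \<in> l2 \<and> (l2_norm (P U a))\<^sup>2 \<le> Nf U a"
  proof (rule l2_boundI)
    fix E :: "'a set" assume E: "finite E"
    have "(\<Sum>y\<in>E. (cmod (P U a y))\<^sup>2) = (\<Sum>y\<in>E \<inter> U. (cmod (a y))\<^sup>2)"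
      by (rule sum.mono_neutral_cong_right) (auto simp: P_def E)
    also have "\<dots> \<le> Nf U a" unfolding Nf_def
      by (rule sum_mono2) (auto simp: assms)
    finally show "(\<Sum>y\<in>E. (cmod (P U a y))\<^sup>2) \<le> Nf U a" .
  qed
  then show ?thesis by blast
qed

lemma Q_bound:
  assumes "finite U" shows "Qf A U a \<le> (C A)\<^sup>2 * Nf U a"
proof -
  have D: "P U a \<in> D" using PG_D[OF assms] by blast
  have "Qf A U a \<le> (l2_norm (cm A (P U a)))\<^sup>2"
    unfolding Qf_def by (rule l2_partial[OF cm_l2[OF D] assms])
  also have "\<dots> \<le> (C A * l2_norm (P U a))\<^sup>2"
    by (rule power_mono[OF C_bound[OF D] l2_norm_nonneg])
  also have "\<dots> = (C A)\<^sup>2 * (l2_norm (P U a))\<^sup>2" by (simp add: power_mult_distrib)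
  also have "\<dots> \<le> (C A)\<^sup>2 * Nf U a"
    by (rule mult_left_mono[OF PU_norm[OF assms]]) simp
  finally show ?thesis .
qed

lemma outside:
  assumes unb: "\<forall>K. \<exists>A U a. finite U \<and> Qf A U a > K * Nf U a"
    and W: "finite W"
  shows "\<exists>A U a. finite U \<and> A \<subseteq> U \<and> A \<inter> W = {} \<and> Qf A U a > K * Nf U a"
proof -
  define M where "M = Max ((\<lambda>B. (C B)\<^sup>2) ` Pow W)"
  have M: "B \<subseteq> W \<Longrightarrow> (C B)\<^sup>2 \<le> M" for B
    unfolding M_def by (rule Max_ge) (use W in auto)
  obtain A U a where U: "finite U" and Q: "Qf A U a > (2 * M + 2 * K) * Nf U a"
    using unb by blast
  define A2 where "A2 = (A \<inter> U) - W"
  define B where "B = A \<inter> U \<inter> W"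
  have D: "P U a \<in> D" using PG_D[OF U] by blast
  have eq: "cm A (P U a) y = cm B (P U a) y + cm A2 (P U a) y" if "y \<in> U" for y
  proof -
    have "cm A (P U a) y = cm (A \<inter> U) (P U a) y" by (rule cm_local[OF that])
    also have "A \<inter> U = B \<union> A2" by (auto simp: A2_def B_def)
    also have "cm (B \<union> A2) (P U a) = cm B (P U a) + cm A2 (P U a)"
      by (rule cm_add_set[OF _ D]) (auto simp: A2_def B_def)
    finally show ?thesis by simp
  qed
  have "Qf A U a \<le> 2 * Qf B U a + 2 * Qf A2 U a"
    unfolding Qf_def by (rule sum_split2) (use eq in auto)
  moreover have "Qf B U a \<le> M * Nf U a"
  proof -
    have "(C B)\<^sup>2 \<le> M" by (rule M) (auto simp: B_def)
    then have "(C B)\<^sup>2 * Nf U a \<le> M * Nf U a" by (rule mult_right_mono[OF _ Nf_nonneg])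
    then show ?thesis using Q_bound[OF U, of B a] by linarith
  qed
  ultimately have "Qf A2 U a > K * Nf U a" using Q by (simp add: algebra_simps)
  moreover have "A2 \<subseteq> U" "A2 \<inter> W = {}" by (auto simp: A2_def)
  ultimately show ?thesis using U by blast
qed

end

lemma L2_cmod_add: "L2_set (\<lambda>y. cmod (u y + v y)) E \<le> L2_set (\<lambda>y. cmod (u y)) E + L2_set (\<lambda>y. cmod (v y)) E"
proof -
  have "L2_set (\<lambda>y. cmod (u y + v y)) E \<le> L2_set (\<lambda>y. cmod (u y) + cmod (v y)) E"
    by (rule L2_set_mono) (auto simp: norm_triangle_ineq)
  also have "\<dots> \<le> L2_set (\<lambda>y. cmod (u y)) E + L2_set (\<lambda>y. cmod (v y)) E"
    by (rule L2_set_triangle_ineq)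
  finally show ?thesis .
qed

lemma L2_subset: "finite U \<Longrightarrow> E \<subseteq> U \<Longrightarrow> L2_set f E \<le> L2_set f U"
  unfolding L2_set_def by (intro real_sqrt_le_mono sum_mono2) auto

context coarse
begin

lemma finite_bound: "\<exists>K. \<forall>A U a. finite U \<longrightarrow> Qf A U a \<le> K * Nf U a"
proof (rule ccontr)
  assume "\<not> ?thesis"
  then have unb: "\<forall>K. \<exists>A U a. finite U \<and> Qf A U a > K * Nf U a" by (simp add: not_le)
  define prp where "prp = (\<lambda>k S W (t :: 'a set \<times> 'a set \<times> ('a \<Rightarrow> complex)).
     finite (fst (snd t)) \<and> fst t \<subseteq> fst (snd t) \<and> fst t \<inter> W = {} \<and>
     Qf (fst t) (fst (snd t)) (snd (snd t)) > (2 * (C S)\<^sup>2 + 2 * real k) * Nf (fst (snd t)) (snd (snd t)))"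
  define pick where "pick = (\<lambda>k S W. SOME t. prp k S W t)"
  have pick: "prp k S W (pick k S W)" if fW: "finite W" for k S W
  proof -
    obtain A U a where "finite U \<and> A \<subseteq> U \<and> A \<inter> W = {} \<and> Qf A U a > (2 * (C S)\<^sup>2 + 2 * real k) * Nf U a"
      using outside[OF unb fW, of "2 * (C S)\<^sup>2 + 2 * real k"] by (elim exE) blast
    then have "prp k S W (A, U, a)" unfolding prp_def fst_conv snd_conv .
    then have "prp k S W (SOME t. prp k S W t)" by (rule someI[of "prp k S W"])
    then show ?thesis unfolding pick_def .
  qed
  define st where "st = rec_nat ({}, {}) (\<lambda>k p. (fst p \<union> fst (pick k (fst p) (snd p)), snd p \<union> fst (snd (pick k (fst p) (snd p)))))"
  define S where "S k = fst (st k)" for k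
  define W where "W k = snd (st k)" for k
  define At where "At k = fst (pick k (S k) (W k))" for k
  define Ut where "Ut k = fst (snd (pick k (S k) (W k)))" for k
  define ak where "ak k = snd (snd (pick k (S k) (W k)))" for k
  have S0: "S 0 = {}" "W 0 = {}" by (simp_all add: S_def W_def st_def)
  have SS: "S (Suc k) = S k \<union> At k" "W (Suc k) = W k \<union> Ut k" for k
    by (simp_all add: S_def W_def st_def At_def Ut_def)
  have inv: "finite (W k) \<and> S k \<subseteq> W k" for k
  proof (induction k)
    case 0 then show ?case by (simp add: S0)
  next
    case (Suc k)
    have "prp k (S k) (W k) (pick k (S k) (W k))" using pick Suc by blast
    then have "finite (Ut k)" "At k \<subseteq> Ut k" by (simp_all add: prp_def Ut_def At_def)
    then show ?case using Suc by (auto simp: SS)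
  qed
  have Pk: "finite (Ut k)" "At k \<subseteq> Ut k" "At k \<inter> W k = {}"
    "Qf (At k) (Ut k) (ak k) > (2 * (C (S k))\<^sup>2 + 2 * real k) * Nf (Ut k) (ak k)" for k
  proof -
    have "prp k (S k) (W k) (pick k (S k) (W k))" using pick inv by blast
    then show "finite (Ut k)" "At k \<subseteq> Ut k" "At k \<inter> W k = {}"
      "Qf (At k) (Ut k) (ak k) > (2 * (C (S k))\<^sup>2 + 2 * real k) * Nf (Ut k) (ak k)"
      by (simp_all add: prp_def Ut_def At_def ak_def)
  qed
  have Wmono: "W k \<subseteq> W j" if "k \<le> j" for k j
    using that by (induction rule: dec_induct) (auto simp: SS)
  have Smono: "S k \<subseteq> S j" if "k \<le> j" for k j
    using that by (induction rule: dec_induct) (auto simp: SS)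
  have SW: "S j \<inter> W k = S k" if "k \<le> j" for k j
    using that
  proof (induction rule: dec_induct)
    case base then show ?case using inv by blast
  next
    case (step j)
    have "At j \<inter> W k = {}" using Pk(3)[of j] Wmono[OF step(1)] by blast
    then show ?case using step by (auto simp: SS)
  qed
  define Si where "Si = (\<Union>k. S k)"
  have SiW: "Si \<inter> W k = S k" for k
  proof
    show "Si \<inter> W k \<subseteq> S k"
    proof
      fix x assume "x \<in> Si \<inter> W k"
      then obtain j where j: "x \<in> S j" "x \<in> W k" by (auto simp: Si_def)
      show "x \<in> S k"
      proof (cases "k \<le> j")
        case True then show ?thesis using SW[OF True] j by blast
      next
        case False then show ?thesis using Smono[of j k] j by auto
      qed
    qed
    show "S k \<subseteq> Si \<inter> W k" using inv[of k] by (auto simp: Si_def)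
  qed
  define k where "k = nat \<lceil>(C Si)\<^sup>2\<rceil>"
  have kge: "(C Si)\<^sup>2 \<le> real k" unfolding k_def by linarith
  define U where "U = Ut k"
  define a where "a = ak k"
  have U: "finite U" using Pk(1) by (simp add: U_def)
  have D: "P U a \<in> D" using PG_D[OF U] by blast
  have SiU: "Si \<inter> U = (S k \<inter> U) \<union> At k"
  proof -
    have "U \<subseteq> W (Suc k)" by (simp add: SS U_def)
    then have "Si \<inter> U = S (Suc k) \<inter> U" using SiW[of "Suc k"] by blast
    then show ?thesis using Pk(2)[of k] by (auto simp: SS U_def)
  qed
  have eq: "cm (At k) (P U a) y = cm Si (P U a) y + (- cm (S k) (P U a) y)" if y: "y \<in> U" for y
  proof -
    have dis: "(S k \<inter> U) \<inter> At k = {}" using Pk(3)[of k] inv[of k] by blast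
    have "cm Si (P U a) y = cm (Si \<inter> U) (P U a) y" by (rule cm_local[OF y])
    also have "\<dots> = cm (S k \<inter> U) (P U a) y + cm (At k) (P U a) y"
      unfolding SiU cm_add_set[OF dis D] by simp
    also have "cm (S k \<inter> U) (P U a) y = cm (S k) (P U a) y"
      by (rule cm_local[OF y, symmetric])
    finally show ?thesis by simp
  qed
  have "Qf (At k) U a \<le> 2 * Qf Si U a + 2 * (\<Sum>y\<in>U. (cmod (- cm (S k) (P U a) y))\<^sup>2)"
    unfolding Qf_def by (rule sum_split2) (use eq in auto)
  also have "(\<Sum>y\<in>U. (cmod (- cm (S k) (P U a) y))\<^sup>2) = Qf (S k) U a"
    by (simp add: Qf_def)
  finally have q1: "Qf (At k) U a \<le> 2 * Qf Si U a + 2 * Qf (S k) U a" .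
  have q2: "Qf (S k) U a \<le> (C (S k))\<^sup>2 * Nf U a" by (rule Q_bound[OF U])
  have q3: "Qf Si U a \<le> (C Si)\<^sup>2 * Nf U a" by (rule Q_bound[OF U])
  have q4: "Qf (At k) U a > (2 * (C (S k))\<^sup>2 + 2 * real k) * Nf U a"
    using Pk(4)[of k] by (simp add: U_def a_def)
  have q5: "(C Si)\<^sup>2 * Nf U a \<le> real k * Nf U a"
    by (rule mult_right_mono[OF kge Nf_nonneg])
  have q6: "2 * ((C (S k))\<^sup>2 * Nf U a) + 2 * (real k * Nf U a) < Qf (At k) U a"
    using q4 by (simp only: distrib_right mult.assoc)
  from q1 q2 q3 q5 q6 show False by linarith
qed

lemma op_bound: "\<exists>K\<ge>0. \<forall>A. \<forall>\<eta>\<in>D. l2_norm (cm A \<eta>) \<le> K * l2_norm \<eta>"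
proof -
  obtain K0 where K0: "\<And>A U a. finite U \<Longrightarrow> Qf A U a \<le> K0 * Nf U a"
    using finite_bound by blast
  define K where "K = sqrt (max K0 0)"
  have K: "0 \<le> K" by (simp add: K_def)
  have Qb: "sqrt (Qf A U a) \<le> K * sqrt (Nf U a)" if "finite U" for A U a
  proof -
    have "Qf A U a \<le> max K0 0 * Nf U a"
      using K0[OF that, of A a] mult_right_mono[of K0 "max K0 0" "Nf U a"] Nf_nonneg[of U a] by linarith
    then have "sqrt (Qf A U a) \<le> sqrt (max K0 0 * Nf U a)" by (rule real_sqrt_le_mono)
    then show ?thesis by (simp add: K_def real_sqrt_mult)
  qed
  have main: "l2_norm (cm A \<eta>) \<le> K * l2_norm \<eta>" if \<eta>: "\<eta> \<in> D" for A \<eta>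
  proof -
    have "cm A \<eta> \<in> l2 \<and> l2_norm (cm A \<eta>) \<le> K * l2_norm \<eta>"
    proof (rule l2_boundI_L)
      fix E :: "'a set" assume E: "finite E"
      show "L2_set (\<lambda>y. cmod (cm A \<eta> y)) E \<le> K * l2_norm \<eta>"
      proof (rule field_le_epsilon)
        fix d :: real assume d: "0 < d"
        have dd: "0 < d / (\<bar>C A\<bar> + 1)" using d by simp
        obtain F where F: "finite F" "l2_norm (P (- F) \<eta>) < d / (\<bar>C A\<bar> + 1)"
          using l2_tail[OF D_l2[OF \<eta>] dd] by blast
        define U where "U = E \<union> F"
        have U: "finite U" using E F by (simp add: U_def)
        have split: "\<eta> = P U \<eta> + P (- U) \<eta>" by (auto simp: P_def fun_eq_iff)
        have "cm A \<eta> = cm A (P U \<eta> + P (- U) \<eta>)" using split by (rule arg_cong)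
        also have "\<dots> = cm A (P U \<eta>) + cm A (P (- U) \<eta>)"
          by (rule cm_add_vec[OF P_D[OF \<eta>] P_D[OF \<eta>]])
        finally have cms: "cm A \<eta> = cm A (P U \<eta>) + cm A (P (- U) \<eta>)" .
        have "L2_set (\<lambda>y. cmod (cm A \<eta> y)) E \<le>
            L2_set (\<lambda>y. cmod (cm A (P U \<eta>) y)) E + L2_set (\<lambda>y. cmod (cm A (P (- U) \<eta>) y)) E"
          unfolding cms plus_fun_apply by (rule L2_cmod_add)
        moreover have "L2_set (\<lambda>y. cmod (cm A (P U \<eta>) y)) E \<le> K * l2_norm \<eta>"
        proof -
          have "L2_set (\<lambda>y. cmod (cm A (P U \<eta>) y)) E \<le> L2_set (\<lambda>y. cmod (cm A (P U \<eta>) y)) U"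
            by (rule L2_subset[OF U]) (simp add: U_def)
          also have "\<dots> = sqrt (Qf A U \<eta>)" by (simp add: L2_set_def Qf_def)
          also have "\<dots> \<le> K * sqrt (Nf U \<eta>)" by (rule Qb[OF U])
          also have "sqrt (Nf U \<eta>) = L2_set (\<lambda>y. cmod (\<eta> y)) U" by (simp add: L2_set_def Nf_def)
          also have "K * \<dots> \<le> K * l2_norm \<eta>"
            by (rule mult_left_mono[OF l2_partial_L[OF D_l2[OF \<eta>]] K])
          finally show ?thesis .
        qed
        moreover have "L2_set (\<lambda>y. cmod (cm A (P (- U) \<eta>) y)) E \<le> d"
        proof -
          have "L2_set (\<lambda>y. cmod (cm A (P (- U) \<eta>) y)) E \<le> l2_norm (cm A (P (- U) \<eta>))"
            by (rule l2_partial_L[OF cm_l2[OF P_D[OF \<eta>]]])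
          also have "\<dots> \<le> C A * l2_norm (P (- U) \<eta>)" by (rule C_bound[OF P_D[OF \<eta>]])
          also have "\<dots> \<le> \<bar>C A\<bar> * l2_norm (P (- U) \<eta>)"
            by (rule mult_right_mono[OF abs_ge_self l2_norm_nonneg])
          also have "\<dots> \<le> \<bar>C A\<bar> * l2_norm (P (- F) \<eta>)"
            by (rule mult_left_mono) (use P_l2_mono[OF D_l2[OF \<eta>], of "- U" "- F"] in \<open>auto simp: U_def\<close>)
          also have "\<dots> \<le> \<bar>C A\<bar> * (d / (\<bar>C A\<bar> + 1))"
            using F(2) by (intro mult_left_mono) auto
          also have "\<dots> \<le> d"
            using d by (simp add: field_simps)
          finally show ?thesis .
        qed
        ultimately show "L2_set (\<lambda>y. cmod (cm A \<eta> y)) E \<le> K * l2_norm \<eta> + d" by linarith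
      qed
    qed
    then show ?thesis by blast
  qed
  show ?thesis using K main by blast
qed

end

lemma inner_delta: "l2_inner \<xi> (delta x) = \<xi> x"
proof -
  have "infsum (\<lambda>y. \<xi> y * cnj (delta x y)) UNIV = infsum (\<lambda>y. \<xi> y * cnj (delta x y)) {x}"
    by (rule infsum_cong_neutral) (auto simp: delta_def)
  then show ?thesis by (simp add: l2_inner_def delta_def)
qed

context coarse
begin

lemma sum_eq: "finite G \<Longrightarrow> (\<Sum>x\<in>G. (\<lambda>z. l2_inner \<xi> (delta x) * h (delta x) z)) = h (P G \<xi>)"
  using PG_D[of G \<xi>] by (simp add: inner_delta)

lemma main_sum:
  assumes xi: "\<xi> \<in> D"
  shows "l2_has_sum (\<lambda>x. (\<lambda>z. l2_inner \<xi> (delta x) * h (delta x) z)) (h \<xi>)"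
  unfolding l2_has_sum_def
proof (intro allI impI)
  fix e :: real assume e: "0 < e"
  obtain K where K: "0 \<le> K" "\<And>A \<eta>. \<eta> \<in> D \<Longrightarrow> l2_norm (cm A \<eta>) \<le> K * l2_norm \<eta>"
    using op_bound by blast
  define e0 where "e0 = e / (4 * (K + 1))"
  have e0: "0 < e0" using e K by (simp add: e0_def)
  have Ke0: "K * e0 \<le> e / 4"
    using e K by (simp add: e0_def field_simps)
  have e4: "0 < e / 4" using e by simp
  obtain F0 where F0: "finite F0" "l2_norm (P (- F0) \<xi>) < e0"
    using l2_tail[OF D_l2[OF xi] e0] by blast
  obtain Fa where Fa: "finite Fa" "l2_norm (P (- Fa) (h \<xi>)) < e / 4"
    using l2_tail[OF hD_l2[OF xi] e4] by blast
  define a where "a = P F0 \<xi>"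
  have aD: "a \<in> D" unfolding a_def by (rule P_D[OF xi])
  obtain Fb where Fb: "finite Fb" "l2_norm (P (- Fb) (h a)) < e / 4"
    using l2_tail[OF hD_l2[OF aD] e4] by blast
  show "\<exists>F. finite F \<and> (\<forall>G. finite G \<and> F \<subseteq> G \<longrightarrow>
      l2_norm (h \<xi> - (\<Sum>x\<in>G. (\<lambda>z. l2_inner \<xi> (delta x) * h (delta x) z))) < e)"
  proof (intro exI conjI allI impI)
    show "finite (F0 \<union> Fa \<union> Fb)" using F0 Fa Fb by simp
    fix G assume G: "finite G \<and> F0 \<union> Fa \<union> Fb \<subseteq> G"
    define R where "R = - G"
    define b where "b = P (G - F0) \<xi>"
    define r where "r = P R \<xi>"
    have bD: "b \<in> D" unfolding b_def by (rule P_D[OF xi])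
    have rD: "r \<in> D" unfolding r_def by (rule P_D[OF xi])
    have xs: "\<xi> = (a + b) + r" using G by (auto simp: a_def b_def r_def R_def P_def fun_eq_iff)
    have PG: "P G \<xi> = a + b" using G by (auto simp: a_def b_def P_def fun_eq_iff)
    have hxi: "h \<xi> = (h a + h b) + h r"
      by (subst xs) (simp only: h_add D_add aD bD rD)
    have hPG: "h (P G \<xi>) = h a + h b" unfolding PG by (rule h_add[OF aD bD])
    have Rb: "P R b = 0" by (auto simp: b_def R_def P_def fun_eq_iff)
    have Rr: "P R r = r" by (auto simp: r_def P_def fun_eq_iff)
    have diff: "h \<xi> - h (P G \<xi>) = h r" unfolding hxi hPG by simp
    have ident: "h r = (P R (h \<xi>) - P R (h a)) + cm R b + P G (cm R r)"
      unfolding cm_def Rb Rr h_zero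
      by (auto simp: fun_eq_iff P_def R_def hxi)
    have l2s: "P R (h \<xi>) \<in> l2" "P R (h a) \<in> l2" "cm R b \<in> l2" "P G (cm R r) \<in> l2"
      using P_l2 hD_l2 xi aD cm_l2 bD rD by blast+
    have n1: "l2_norm (P R (h \<xi>)) < e / 4"
      using P_l2_mono[OF hD_l2[OF xi], of R "- Fa"] G Fa(2) by (auto simp: R_def)
    have n2: "l2_norm (P R (h a)) < e / 4"
      using P_l2_mono[OF hD_l2[OF aD], of R "- Fb"] G Fb(2) by (auto simp: R_def)
    have n3: "l2_norm (cm R b) \<le> e / 4"
    proof -
      have "l2_norm b \<le> l2_norm (P (- F0) \<xi>)"
        using P_l2_mono[OF D_l2[OF xi], of "G - F0" "- F0"] by (auto simp: b_def)
      then have "l2_norm b \<le> e0" using F0(2) by simp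
      then have "K * l2_norm b \<le> K * e0" by (rule mult_left_mono[OF _ K(1)])
      then show ?thesis using K(2)[OF bD, of R] Ke0 by linarith
    qed
    have n4: "l2_norm (P G (cm R r)) \<le> e / 4"
    proof -
      have "l2_norm r \<le> l2_norm (P (- F0) \<xi>)"
        using P_l2_mono[OF D_l2[OF xi], of R "- F0"] G by (auto simp: r_def R_def)
      then have "l2_norm r \<le> e0" using F0(2) by simp
      then have "K * l2_norm r \<le> K * e0" by (rule mult_left_mono[OF _ K(1)])
      moreover have "l2_norm (P G (cm R r)) \<le> l2_norm (cm R r)"
        using P_l2[OF cm_l2[OF rD]] by blast
      ultimately show ?thesis using K(2)[OF rD, of R] Ke0 by linarith
    qed
    have t1: "P R (h \<xi>) - P R (h a) \<in> l2 \<and> l2_norm (P R (h \<xi>) - P R (h a)) \<le> l2_norm (P R (h \<xi>)) + l2_norm (P R (h a))"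
      by (rule l2_diff[OF l2s(1,2)])
    have t2: "(P R (h \<xi>) - P R (h a)) + cm R b \<in> l2 \<and> l2_norm ((P R (h \<xi>) - P R (h a)) + cm R b) \<le> l2_norm (P R (h \<xi>) - P R (h a)) + l2_norm (cm R b)"
      by (rule l2_add[OF t1[THEN conjunct1] l2s(3)])
    have t3: "l2_norm ((P R (h \<xi>) - P R (h a)) + cm R b + P G (cm R r)) \<le> l2_norm ((P R (h \<xi>) - P R (h a)) + cm R b) + l2_norm (P G (cm R r))"
      using l2_add[OF t2[THEN conjunct1] l2s(4)] by blast
    have "l2_norm (h r) < e"
      unfolding ident using t1 t2 t3 n1 n2 n3 n4 by linarith
    then show "l2_norm (h \<xi> - (\<Sum>x\<in>G. (\<lambda>z. l2_inner \<xi> (delta x) * h (delta x) z))) < e"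
      unfolding sum_eq[OF G[THEN conjunct1]] diff .
  qed
qed

end

theorem theorem4p1p15:
  fixes D :: "('a::metric_space \<Rightarrow> complex) set"
    and h :: "('a \<Rightarrow> complex) \<Rightarrow> ('a \<Rightarrow> complex)"
  assumes "uniformly_locally_finite TYPE('a)"
    and "coarse_operator D h"
  shows "(\<forall>\<xi>\<in>D. l2_has_sum (\<lambda>x. (\<lambda>z. l2_inner \<xi> (delta x) * h (delta x) z)) (h \<xi>))
         \<and> admissible D h"
proof -
  interpret coarse D h by (rule coarse.intro[OF assms(2)])
  have s: "\<forall>\<xi>\<in>D. l2_has_sum (\<lambda>x. (\<lambda>z. l2_inner \<xi> (delta x) * h (delta x) z)) (h \<xi>)"
    using main_sum by blast
  have "admissible D h" unfolding admissible_def using cl c00_D s by blast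
  with s show ?thesis by blast
qed

end
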